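(* Let $s\ge 2$ be an even constant and $\epsilon$ a constant with $0<\epsilon<1/(2s-1)$. For every instance of the class $G^*_\epsilon$ (with $n$ even), the expected number of fitness function evaluations the $(1+1)$~EA needs to find an optimal solution is at least $n^{\Omega(n)}$.
   Context: Partition problem: an instance consists of $n$ jobs with positive processing times $p_1,\dots,p_n$. A solution is $x\in\{0,1\}^n$ (job $i$ on machine $M_1$ if $x_i=0$, on $M_2$ if $x_i=1$), with makespan $f(x)=\max\{\sum_i p_ix_i,\sum_i p_i(1-x_i)\}$ to be minimised; an optimal solution minimises $f$. The class $G^*_\epsilon$: instances with an even number $n$ of jobs, an even number $s=\Theta(1)$ of large jobs, and processing times $p_i=\frac{1}{2s-1}-\frac{\epsilon}{2s}$ for $i\le s$ and $p_i=\frac{s-1}{n-s}\left(\frac{1}{2s-1}+\frac{\epsilon}{2(s-1)}\right)$ for $s<i\le n$, where $0<\epsilon<1/(2s-1)$ is an arbitrarily small constant. The $(1+1)$~EA (minimisation): initialise $x\in\{0,1\}^n$ uniformly at random; in each iteration create $y$ by flipping each bit of $x$ independently with probability $1/n$, and set $x:=y$ if $f(y)\le f(x)$. Asymptotics are as $n\to\infty$. *)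

theory Defs
  imports "HOL-Probability.Probability"
begin

text \<open>Solutions x in {0,1}^n are functions nat => bool that are False outside {..<n};
  x i = True means job i is on machine M2 (x_i = 1). Jobs are indexed 0..n-1.\<close>

definition bitstrings :: "nat \<Rightarrow> (nat \<Rightarrow> bool) set" where
  "bitstrings n = {x. \<forall>i\<ge>n. \<not> x i}"

definition makespan :: "nat \<Rightarrow> (nat \<Rightarrow> real) \<Rightarrow> (nat \<Rightarrow> bool) \<Rightarrow> real" where
  "makespan n p x = max (\<Sum>i\<in>{i. i < n \<and> x i}. p i) (\<Sum>i\<in>{i. i < n \<and> \<not> x i}. p i)"

definition optimal :: "nat \<Rightarrow> (nat \<Rightarrow> real) \<Rightarrow> (nat \<Rightarrow> bool) \<Rightarrow> bool" where
  "optimal n p x \<longleftrightarrow> x \<in> bitstrings n \<and> (\<forall>y\<in>bitstrings n. makespan n p x \<le> makespan n p y)"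

definition ea_init :: "nat \<Rightarrow> (nat \<Rightarrow> bool) pmf" where
  "ea_init n = Pi_pmf {..<n} False (\<lambda>_. bernoulli_pmf (1/2))"

definition ea_mutate :: "nat \<Rightarrow> (nat \<Rightarrow> bool) \<Rightarrow> (nat \<Rightarrow> bool) pmf" where
  "ea_mutate n x = map_pmf (\<lambda>m i. x i \<noteq> m i) (Pi_pmf {..<n} False (\<lambda>_. bernoulli_pmf (1 / real n)))"

definition ea_step :: "nat \<Rightarrow> (nat \<Rightarrow> real) \<Rightarrow> (nat \<Rightarrow> bool) \<Rightarrow> (nat \<Rightarrow> bool) pmf" where
  "ea_step n p x = map_pmf (\<lambda>y. if makespan n p y \<le> makespan n p x then y else x) (ea_mutate n x)"

fun ea_paths :: "nat \<Rightarrow> (nat \<Rightarrow> real) \<Rightarrow> nat \<Rightarrow> (nat \<Rightarrow> bool) list pmf" where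
  "ea_paths n p 0 = map_pmf (\<lambda>x. [x]) (ea_init n)"
| "ea_paths n p (Suc t) = ea_paths n p t \<bind> (\<lambda>xs. map_pmf (\<lambda>y. xs @ [y]) (ea_step n p (last xs)))"

text \<open>Let T be the number of iterations until the first optimal search point
  (T = min {t. x_t optimal}). The number of fitness evaluations is 1 + T
  (one for the initial point, one per iteration), and
  E[T] = sum_{t>=0} Pr[T > t] = sum_t Pr[none of x_0..x_t is optimal].\<close>
definition ea_expected_evals :: "nat \<Rightarrow> (nat \<Rightarrow> real) \<Rightarrow> ennreal" where
  "ea_expected_evals n p = 1 + (\<Sum>t. ennreal (measure_pmf.prob (ea_paths n p t)
       {xs. \<forall>x\<in>set xs. \<not> optimal n p x}))"

text \<open>Processing times of the instance of G*_eps with n jobs and s large jobs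
  (jobs 0..s-1 are the large ones, i.e. paper indices 1..s).\<close>
definition G_star_p :: "nat \<Rightarrow> real \<Rightarrow> nat \<Rightarrow> nat \<Rightarrow> real" where
  "G_star_p s \<epsilon> n i = (if i < s then 1 / (2 * real s - 1) - \<epsilon> / (2 * real s)
      else (real s - 1) / (real n - real s) * (1 / (2 * real s - 1) + \<epsilon> / (2 * (real s - 1))))"

end

theory Submission
  imports Defs
begin


lemma prob_all_flip:
  assumes "A \<subseteq> {..<n}" "n > 0"
  shows "measure_pmf.prob (Pi_pmf {..<n} False (\<lambda>_. bernoulli_pmf (1/real n))) {m. \<forall>i\<in>A. m i}
         = (1/real n) ^ card A"
proof -
  define B where "B = (\<lambda>i::nat. if i \<in> A then {True} else UNIV)"
  have "{m. \<forall>i\<in>A. m i} = Pi {..<n} B" using assms(1) by (auto simp: B_def Pi_def)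
  hence "measure_pmf.prob (Pi_pmf {..<n} False (\<lambda>_. bernoulli_pmf (1/real n))) {m. \<forall>i\<in>A. m i}
     = (\<Prod>i\<in>{..<n}. measure_pmf.prob (bernoulli_pmf (1/real n)) (B i))"
    by (simp add: measure_Pi_pmf_Pi)
  also have "\<dots> = (\<Prod>i\<in>{..<n}. if i \<in> A then 1/real n else 1)"
    using assms(2) by (intro prod.cong) (auto simp: B_def measure_pmf_single)
  also have "\<dots> = (1/real n) ^ card A"
    using assms(1) by (simp add: prod.If_cases Int_absorb1 )
  finally show ?thesis .
qed

lemma flip_prob:
  assumes "n > 0"
  shows "measure_pmf.prob (Pi_pmf {..<n} False (\<lambda>_. bernoulli_pmf (1/real n))) {m. K \<le> card {i. i<n \<and> m i}}
         \<le> real (n choose K) * (1/real n)^K"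
proof -
  let ?P = "Pi_pmf {..<n} False (\<lambda>_. bernoulli_pmf (1/real n))"
  define S where "S = {A. A \<subseteq> {..<n} \<and> card A = K}"
  have fS: "finite S" unfolding S_def by (rule finite_subset[of _ "Pow {..<n}"]) auto
  have sub: "{m. K \<le> card {i. i<n \<and> m i}} \<subseteq> (\<Union>A\<in>S. {m. \<forall>i\<in>A. m i})"
  proof
    fix m assume "m \<in> {m. K \<le> card {i. i<n \<and> m i}}"
    hence "K \<le> card {i. i<n \<and> m i}" by simp
    then obtain A where "A \<subseteq> {i. i<n \<and> m i}" "card A = K"
      using obtain_subset_with_card_n by metis
    thus "m \<in> (\<Union>A\<in>S. {m. \<forall>i\<in>A. m i})" by (auto simp: S_def)
  qed
  have "measure_pmf.prob ?P {m. K \<le> card {i. i<n \<and> m i}} \<le> measure_pmf.prob ?P (\<Union>A\<in>S. {m. \<forall>i\<in>A. m i})"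
    using sub by (intro measure_pmf.finite_measure_mono) auto
  also have "\<dots> \<le> (\<Sum>A\<in>S. measure_pmf.prob ?P {m. \<forall>i\<in>A. m i})"
    using fS by (intro measure_UNION_le) auto
  also have "\<dots> = (\<Sum>A\<in>S. (1/real n)^K)"
    using assms by (intro sum.cong refl) (auto simp: S_def prob_all_flip)
  also have "\<dots> = real (n choose K) * (1/real n)^K"
    using n_subsets[of "{..<n}" K] by (simp add: S_def)
  finally show ?thesis .
qed



lemma sum_split:
  assumes "finite X"
  shows "(\<Sum>i\<in>X. (if i<s then a else b::real)) = a * card (X \<inter> {..<s}) + b * card (X - {..<s})"
proof -
  have "(\<Sum>i\<in>X. (if i<s then a else b::real)) = (\<Sum>i\<in>X \<inter> {..<s}. (if i<s then a else b)) + (\<Sum>i\<in>X - {..<s}. (if i<s then a else b))"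
    using assms by (metis sum.Int_Diff)
  also have "\<dots> = (\<Sum>i\<in>X \<inter> {..<s}. a) + (\<Sum>i\<in>X - {..<s}. b)"
    by (intro arg_cong2[where f="(+)"] sum.cong) auto
  finally show ?thesis by simp
qed

lemma total_sum:
  fixes s n :: nat and a b :: real
  assumes "s < n"
  shows "(\<Sum>i\<in>{i. i<n \<and> P i}. (if i<s then a else b::real)) + (\<Sum>i\<in>{i. i<n \<and> \<not> P i}. (if i<s then a else b::real))
     = real s * a + real (n - s) * b"
proof -
  have "(\<Sum>i\<in>{i. i<n \<and> P i}. (if i<s then a else b::real)) + (\<Sum>i\<in>{i. i<n \<and> \<not> P i}. (if i<s then a else b::real))
     = (\<Sum>i\<in>{..<n}. (if i<s then a else b::real))"
    by (subst sum.union_disjoint[symmetric]) (auto intro!: sum.cong simp: finite_nat_set_iff_bounded)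
  also have "\<dots> = a * card ({..<n} \<inter> {..<s}) + b * card ({..<n} - {..<s})" by (rule sum_split) auto
  also have "{..<n} \<inter> {..<s} = {..<s}" using assms by auto
  also have "{..<n} - {..<s} = {s..<n}" by auto
  finally show ?thesis by simp
qed

lemma trap:
  fixes s n :: nat and a b :: real and m :: "nat \<Rightarrow> bool"
  defines "p \<equiv> (\<lambda>i. if i<s then a else b)"
  assumes sn: "s < n" and a: "a > 0" and b: "b > 0" and tot: "real s * a + real (n-s) * b = 1" and big: "1 \<le> 2 * real s * a"
    and small: "real (card {i. i<n \<and> m i}) * b < 1 - (2 * real s - 1) * a" and out: "\<forall>i\<ge>n. \<not> m i"
  shows "(\<lambda>i. (i<s) \<noteq> m i) = (\<lambda>i. i<s) \<or> makespan n p (\<lambda>i. (i<s) \<noteq> m i) > makespan n p (\<lambda>i. i<s)"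
proof -
  define M where "M = {i. i<n \<and> m i}"
  define y where "y = (\<lambda>i. (i<s) \<noteq> m i)"
  have fM: "finite M" by (simp add: M_def)
  have Tx: "(\<Sum>i\<in>{i. i<n \<and> i<s}. p i) = s * a"
  proof -
    have "{i. i<n \<and> i<s} = {..<s}" using sn by auto
    thus ?thesis by (simp add: p_def)
  qed
  have Fx: "(\<Sum>i\<in>{i. i<n \<and> \<not> i<s}. p i) = (n-s) * b"
    using total_sum[OF sn, where P="\<lambda>i. i<s" and a=a and b=b] Tx unfolding p_def by linarith
  have mx: "makespan n p (\<lambda>i. i<s) = s * a"
    unfolding makespan_def using Tx Fx tot big by auto
  have TY: "(\<Sum>i\<in>{i. i<n \<and> y i}. p i) = a * card ({..<s} - M) + b * card (M - {..<s})"
  proof -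
    have "(\<Sum>i\<in>{i. i<n \<and> y i}. p i) = a * card ({i. i<n \<and> y i} \<inter> {..<s}) + b * card ({i. i<n \<and> y i} - {..<s})"
      unfolding p_def by (rule sum_split) auto
    also have "{i. i<n \<and> y i} \<inter> {..<s} = {..<s} - M" using sn by (auto simp: y_def M_def)
    also have "{i. i<n \<and> y i} - {..<s} = M - {..<s}" by (auto simp: y_def M_def)
    finally show ?thesis .
  qed
  have FY: "(\<Sum>i\<in>{i. i<n \<and> \<not> y i}. p i) = 1 - (\<Sum>i\<in>{i. i<n \<and> y i}. p i)"
    using total_sum[OF sn, where P=y and a=a and b=b] tot by (simp add: p_def)
  have cMs: "card (M - {..<s}) \<le> card M" using fM by (intro card_mono) auto
  show ?thesis
  proof (cases "M = {}")
    case True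
    hence "y = (\<lambda>i. i<s)" using out by (auto simp: y_def M_def fun_eq_iff) (metis not_le)+
    thus ?thesis by (simp add: y_def)
  next
    case False
    show ?thesis
    proof (cases "M \<inter> {..<s} = {}")
      case True
      hence "{..<s} - M = {..<s}" by auto
      moreover have "M - {..<s} \<noteq> {}" using True False by auto
      hence "card (M - {..<s}) \<ge> 1" using fM by (simp add: Suc_le_eq card_gt_0_iff)
      ultimately have "(\<Sum>i\<in>{i. i<n \<and> y i}. p i) > s * a" using TY b
        by (simp add: algebra_simps)
      hence "makespan n p y > s * a" unfolding makespan_def by linarith
      thus ?thesis using mx by (simp add: y_def)
    next
      case False
      have fin: "finite {..<s}" by simp
      have "card ({..<s} - M) = s - card ({..<s} \<inter> M)"
        using card_Diff_subset_Int[OF _ ] by (simp add: card_Diff_subset_Int Int_commute)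
      moreover have "card ({..<s} \<inter> M) \<ge> 1" using False fM by (simp add: Suc_le_eq card_gt_0_iff Int_commute)
      moreover have "card ({..<s} \<inter> M) \<le> s" by (metis card_lessThan Int_lower1 card_mono fin)
      ultimately have c1: "real (card ({..<s} - M)) \<le> real s - 1" by linarith
      have "b * card (M - {..<s}) \<le> b * card M" using cMs b by simp
      hence "(\<Sum>i\<in>{i. i<n \<and> y i}. p i) < a * (real s - 1) + (1 - (2 * real s - 1) * a)"
        using TY small c1 a unfolding M_def
        by (smt (verit) mult_left_mono mult.commute)
      hence "(\<Sum>i\<in>{i. i<n \<and> \<not> y i}. p i) > s * a" using FY by (simp add: algebra_simps)
      hence "makespan n p y > s * a" unfolding makespan_def by linarith
      thus ?thesis using mx by (simp add: y_def)
    qed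
  qed
qed



lemma step_stay:
  fixes s n K :: nat and a b :: real
  assumes sn: "s < n" and a: "a > 0" and b: "b > 0" and tot: "real s * a + real (n-s) * b = 1" and big: "1 \<le> 2 * real s * a"
    and Kb: "\<forall>c::nat. c < K \<longrightarrow> real c * b < 1 - (2 * real s - 1) * a"
  shows "measure_pmf.prob (ea_step n (\<lambda>i. if i<s then a else b) (\<lambda>i. i<s)) {\<lambda>i. i<s}
         \<ge> 1 - real (n choose K) * (1/real n)^K"
proof -
  let ?p = "\<lambda>i. if i<s then a else b"
  let ?x = "\<lambda>i::nat. i<s"
  let ?P = "Pi_pmf {..<n} False (\<lambda>_. bernoulli_pmf (1/real n))"
  let ?g = "\<lambda>m. (\<lambda>y. if makespan n ?p y \<le> makespan n ?p ?x then y else ?x) (\<lambda>i. ?x i \<noteq> m i)"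
  have n0: "n > 0" using sn by simp
  have eq: "measure_pmf.prob (ea_step n ?p ?x) {?x} = measure_pmf.prob ?P (?g -` {?x})"
    unfolding ea_step_def ea_mutate_def map_pmf_comp measure_map_pmf o_def by (rule refl)
  have sub: "{m. \<not> K \<le> card {i. i<n \<and> m i}} \<inter> set_pmf ?P \<subseteq> ?g -` {?x}"
  proof
    fix m assume m: "m \<in> {m. \<not> K \<le> card {i. i<n \<and> m i}} \<inter> set_pmf ?P"
    have out: "\<forall>i\<ge>n. \<not> m i" using m set_Pi_pmf_subset[of "{..<n}" False "\<lambda>_. bernoulli_pmf (1/real n)"] by fastforce
    have "real (card {i. i<n \<and> m i}) * b < 1 - (2 * real s - 1) * a" using m Kb by auto
    from trap[OF sn a b tot big this out] show "m \<in> ?g -` {?x}" by auto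
  qed
  have "measure_pmf.prob ?P (?g -` {?x}) \<ge> measure_pmf.prob ?P ({m. \<not> K \<le> card {i. i<n \<and> m i}} \<inter> set_pmf ?P)"
    using sub by (intro measure_pmf.finite_measure_mono) auto
  also have "measure_pmf.prob ?P ({m. \<not> K \<le> card {i. i<n \<and> m i}} \<inter> set_pmf ?P)
      = measure_pmf.prob ?P (space ?P - {m. K \<le> card {i. i<n \<and> m i}})"
    by (subst measure_Int_set_pmf) (auto intro!: arg_cong[where f="measure_pmf.prob ?P"])
  also have "\<dots> = 1 - measure_pmf.prob ?P {m. K \<le> card {i. i<n \<and> m i}}"
    by (rule measure_pmf.prob_compl) auto
  finally show ?thesis using eq flip_prob[OF n0, of K] by linarith
qed

lemma paths_stay:
  fixes n :: nat and p :: "nat \<Rightarrow> real" and x :: "nat \<Rightarrow> bool" and q :: real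
  assumes x: "\<forall>i\<ge>n. \<not> x i" and q: "0 \<le> q" and st: "measure_pmf.prob (ea_step n p x) {x} \<ge> q"
  shows "measure_pmf.prob (ea_paths n p t) {xs. xs \<noteq> [] \<and> (\<forall>y\<in>set xs. y = x)} \<ge> (1/2)^n * q^t"
proof (induction t)
  case 0
  have "measure_pmf.prob (ea_paths n p 0) {xs. xs \<noteq> [] \<and> (\<forall>y\<in>set xs. y = x)} = measure_pmf.prob (ea_init n) {x}"
    by (auto intro!: arg_cong[where f="measure_pmf.prob (ea_init n)"])
  also have "\<dots> = (1/2)^n" unfolding ea_init_def measure_pmf_single using x
    by (subst pmf_Pi) auto
  finally show ?case by simp
next
  case (Suc t)
  define E where "E = {xs. xs \<noteq> [] \<and> (\<forall>y\<in>set xs. y = x)}"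
  let ?f = "\<lambda>xs. map_pmf (\<lambda>y. xs @ [y]) (ea_step n p (last xs))"
  have IH: "measure_pmf.prob (ea_paths n p t) E \<ge> (1/2)^n * q^t" using Suc.IH by (simp add: E_def)
  have "emeasure (measure_pmf (ea_paths n p (Suc t))) E = (\<integral>\<^sup>+xs. emeasure (?f xs) E \<partial>ea_paths n p t)"
    by simp
  also have "\<dots> \<ge> (\<integral>\<^sup>+xs. ennreal q * indicator E xs \<partial>ea_paths n p t)"
  proof (intro nn_integral_mono)
    fix xs
    show "ennreal q * indicator E xs \<le> emeasure (?f xs) E"
    proof (cases "xs \<in> E")
      case True
      hence l: "last xs = x" by (auto simp: E_def)
      have "{x} \<subseteq> (\<lambda>y. xs @ [y]) -` E" using True by (auto simp: E_def)
      hence "emeasure (ea_step n p x) {x} \<le> emeasure (ea_step n p x) ((\<lambda>y. xs @ [y]) -` E)"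
        by (intro emeasure_mono) auto
      moreover have "ennreal q \<le> emeasure (ea_step n p x) {x}"
        using st by (simp add: measure_pmf.emeasure_eq_measure)
      ultimately show ?thesis using True l by simp
    qed simp
  qed
  also have "(\<integral>\<^sup>+xs. ennreal q * indicator E xs \<partial>ea_paths n p t) = ennreal q * emeasure (ea_paths n p t) E"
    by (rule nn_integral_cmult_indicator) auto
  also have "\<dots> = ennreal (q * measure_pmf.prob (ea_paths n p t) E)"
    using q by (simp add: measure_pmf.emeasure_eq_measure ennreal_mult)
  finally have "q * measure_pmf.prob (ea_paths n p t) E \<le> measure_pmf.prob (ea_paths n p (Suc t)) E"
    by (simp add: measure_pmf.emeasure_eq_measure)
  moreover have "q * ((1/2)^n * q^t) \<le> q * measure_pmf.prob (ea_paths n p t) E"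
    using IH q by (intro mult_left_mono) auto
  ultimately show ?case by (simp add: E_def algebra_simps)
qed



lemma not_opt:
  fixes s n :: nat and a b :: real
  assumes sn: "s < n" and es: "even s" and en: "even n" and tot: "real s * a + real (n-s) * b = 1" and big: "1 < 2 * real s * a"
  shows "\<not> optimal n (\<lambda>i. if i<s then a else b) (\<lambda>i. i<s)"
proof -
  let ?p = "\<lambda>i. if i<s then a else b"
  define y where "y = (\<lambda>i. i < s div 2 \<or> (s \<le> i \<and> i < s + (n-s) div 2))"
  have yb: "y \<in> bitstrings n" using sn en es unfolding y_def bitstrings_def by auto
  have Tx: "(\<Sum>i\<in>{i. i<n \<and> i<s}. ?p i) = s * a"
  proof -
    have "{i. i<n \<and> i<s} = {..<s}" using sn by auto
    thus ?thesis by simp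
  qed
  have mx: "makespan n ?p (\<lambda>i. i<s) \<ge> s * a"
    by (simp only: makespan_def Tx max.cobounded1)
  have TY: "(\<Sum>i\<in>{i. i<n \<and> y i}. ?p i) = a * (s div 2) + b * ((n-s) div 2)"
  proof -
    have "(\<Sum>i\<in>{i. i<n \<and> y i}. ?p i) = a * card ({i. i<n \<and> y i} \<inter> {..<s}) + b * card ({i. i<n \<and> y i} - {..<s})"
      by (rule sum_split) auto
    also have "{i. i<n \<and> y i} \<inter> {..<s} = {..<s div 2}" using sn by (auto simp: y_def)
    also have "{i. i<n \<and> y i} - {..<s} = {s..<s + (n-s) div 2}" using sn by (auto simp: y_def)
    finally show ?thesis by simp
  qed
  have "real (s div 2) = real s / 2" using es by auto
  moreover have "real ((n-s) div 2) = real (n-s) / 2"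
  proof -
    have "even (n-s)" using es en sn by auto
    then obtain k where "n - s = 2*k" by (elim evenE)
    thus ?thesis by simp
  qed
  ultimately have TY2: "(\<Sum>i\<in>{i. i<n \<and> y i}. ?p i) = 1/2" using TY tot by (simp add: field_simps)
  have FY: "(\<Sum>i\<in>{i. i<n \<and> \<not> y i}. ?p i) = 1/2"
    using total_sum[OF sn, where P=y and a=a and b=b] tot TY2 by linarith
  have "makespan n ?p y = 1/2" unfolding makespan_def using TY2 FY by simp
  hence "makespan n ?p y < makespan n ?p (\<lambda>i. i<s)" using mx big by linarith
  thus ?thesis using yb unfolding optimal_def by force
qed

lemma lower_bound_n:
  fixes s n K :: nat and a b q :: real
  assumes sn: "s < n" and es: "even s" and en: "even n" and a: "a > 0" and b: "b > 0"
    and tot: "real s * a + real (n-s) * b = 1" and big: "1 < 2 * real s * a"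
    and Kb: "\<forall>c::nat. c < K \<longrightarrow> real c * b < 1 - (2 * real s - 1) * a"
    and nK: "2^n \<le> real n ^ K"
  shows "ennreal (real n ^ K / 4^n) \<le> ea_expected_evals n (\<lambda>i. if i<s then a else b)"
proof -
  let ?p = "\<lambda>i. if i<s then a else b"
  let ?x = "\<lambda>i::nat. i<s"
  define q where "q = 1 - 2^n / real n ^ K"
  have n0: "n > 0" using sn by simp
  have q0: "0 \<le> q" using nK n0 by (simp add: q_def field_simps)
  have q1: "q < 1" using n0 by (simp add: q_def)
  have "real (n choose K) \<le> real (2^n)" using binomial_le_pow2 by (simp only: of_nat_le_iff)
  hence "real (n choose K) * (1/real n)^K \<le> 2^n * (1/real n)^K"
    by (intro mult_right_mono) auto
  moreover have "(2::real)^n * (1/real n)^K = 2^n / real n ^K" by (simp add: power_one_over)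
  moreover have "1 \<le> 2 * real s * a" using big by simp
  ultimately have st: "measure_pmf.prob (ea_step n ?p ?x) {?x} \<ge> q"
    using step_stay[OF sn a b tot _ Kb] unfolding q_def by linarith
  have ps: "\<And>t. measure_pmf.prob (ea_paths n ?p t) {xs. xs \<noteq> [] \<and> (\<forall>y\<in>set xs. y = ?x)} \<ge> (1/2)^n * q^t"
    by (rule paths_stay[OF _ q0 st]) (use sn in auto)
  have no: "\<not> optimal n ?p ?x" by (rule not_opt[OF sn es en tot big])
  have ps2: "\<And>t. measure_pmf.prob (ea_paths n ?p t) {xs. \<forall>x\<in>set xs. \<not> optimal n ?p x} \<ge> (1/2)^n * q^t"
  proof -
    fix t
    have "measure_pmf.prob (ea_paths n ?p t) {xs. xs \<noteq> [] \<and> (\<forall>y\<in>set xs. y = ?x)}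
       \<le> measure_pmf.prob (ea_paths n ?p t) {xs. \<forall>x\<in>set xs. \<not> optimal n ?p x}"
      using no by (intro measure_pmf.finite_measure_mono) auto
    thus "measure_pmf.prob (ea_paths n ?p t) {xs. \<forall>x\<in>set xs. \<not> optimal n ?p x} \<ge> (1/2)^n * q^t"
      using ps[of t] by linarith
  qed
  have geo: "(\<Sum>t. ennreal ((1/2)^n * q^t)) = ennreal ((1/2)^n * (1 / (1 - q)))"
  proof (rule suminf_ennreal_eq)
    show "(\<lambda>t. (1/2)^n * q^t) sums ((1/2)^n * (1 / (1 - q)))"
      by (rule sums_mult, rule geometric_sums) (use q0 q1 in auto)
  qed (use q0 in auto)
  have "(1/2)^n * (1 / (1 - q)) = real n ^ K / 4^n"
  proof -
    have "(4::real)^n = 2^n * 2^n" by (metis power_mult_distrib num_double numeral_times_numeral)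
    moreover have "1 - q = 2^n / real n ^ K" by (simp add: q_def)
    ultimately have "1 / (1 - q) = real n ^ K / 2^n" by simp
    moreover have "(1/2::real)^n * (real n ^ K / 2^n) = real n ^ K / (2^n * 2^n)" by (simp add: power_one_over)
    ultimately show ?thesis using \<open>(4::real)^n = 2^n * 2^n\<close> by simp
  qed
  hence "ennreal (real n ^ K / 4^n) = (\<Sum>t. ennreal ((1/2)^n * q^t))" using geo by simp
  also have "\<dots> \<le> (\<Sum>t. ennreal (measure_pmf.prob (ea_paths n ?p t) {xs. \<forall>x\<in>set xs. \<not> optimal n ?p x}))"
    by (intro suminf_le summableI) (use ps2 in \<open>auto intro: ennreal_leI\<close>)
  also have "\<dots> \<le> ea_expected_evals n ?p" unfolding ea_expected_evals_def by simp
  finally show ?thesis .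
qed



lemma asym:
  fixes n K :: nat and \<delta> :: real
  assumes d: "\<delta> > 0" and n: "n \<ge> 1" and L: "ln (real n) \<ge> 2 * ln 4 / \<delta>" and K: "real K \<ge> \<delta> * n"
  shows "2^n \<le> real n ^ K" and "real n powr (\<delta>/2 * real n) \<le> real n ^ K / 4^n"
proof -
  define X where "X = real n powr (\<delta>/2 * real n)"
  have n0: "real n > 0" using n by simp
  have "real n ^ K = real n powr real K" using n0 by (simp add: powr_realpow)
  also have "\<dots> \<ge> real n powr (\<delta> * n)" using n K by (intro powr_mono) auto
  finally have h1: "real n ^ K \<ge> real n powr (\<delta> * n)" .
  have "real n powr (\<delta> * n) = X * X" unfolding X_def by (simp flip: powr_add)
  with h1 have h2: "real n ^ K \<ge> X * X" by simp
  have "ln 4 \<le> \<delta>/2 * ln (real n)" using L d by (simp add: field_simps)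
  hence "real n * ln 4 \<le> \<delta>/2 * real n * ln (real n)" using n
    by (metis mult.commute mult.left_commute mult_left_mono of_nat_0_le_iff)
  hence "exp (real n * ln 4) \<le> exp (\<delta>/2 * real n * ln (real n))" by simp
  moreover have "exp (real n * ln 4) = 4^n" by (simp add: exp_of_nat_mult)
  moreover have "exp (\<delta>/2 * real n * ln (real n)) = X" unfolding X_def powr_def using n0 by (simp add: mult.commute)
  ultimately have h3: "4^n \<le> X" by simp
  have h4: "(1::real) \<le> 4^n" by simp
  have X0: "0 \<le> X" using h3 h4 by linarith
  have "X * 4^n \<le> X * X" using h3 X0 by (intro mult_left_mono) auto
  hence "X * 4^n \<le> real n ^ K" using h2 by linarith
  thus "real n powr (\<delta>/2 * real n) \<le> real n ^ K / 4^n" unfolding X_def[symmetric] by (simp add: field_simps)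
  have "(2::real)^n \<le> 4^n" by (intro power_mono) auto
  also have "4^n \<le> X * X" using h3 h4 by (metis mult_mono order_trans mult_1_left zero_le_one)
  finally show "2^n \<le> real n ^ K" using h2 by linarith
qed



theorem theorem2:
  fixes s :: nat and \<epsilon> :: real
  assumes "even s" and "s \<ge> 2"
    and "0 < \<epsilon>" and "\<epsilon> < 1 / (2 * real s - 1)"
  shows "\<exists>c>0. \<exists>N. \<forall>n\<ge>N. even n \<longrightarrow>
           ennreal (real n powr (c * real n)) \<le> ea_expected_evals n (G_star_p s \<epsilon> n)"
proof -
  note es = assms(1) and s2 = assms(2) and e0 = assms(3) and e1 = assms(4)
  have s2r: "real s \<ge> 2" using s2 by simp
  define a where "a = 1 / (2 * real s - 1) - \<epsilon> / (2 * real s)"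
  define C where "C = 1 / (2 * real s - 1) + \<epsilon> / (2 * (real s - 1))"
  define \<beta> where "\<beta> = (real s - 1) * C"
  define g where "g = 1 - (2 * real s - 1) * a"
  define \<delta> where "\<delta> = g / (2 * \<beta>)"
  define L where "L = 2 * ln 4 / \<delta>"
  define N where "N = 2 * s + 2 + nat \<lceil>exp L\<rceil>"
  have C0: "C > 0" unfolding C_def using s2r e0 by (intro add_pos_pos) auto
  have b0: "\<beta> > 0" unfolding \<beta>_def using C0 s2r by simp
  have g_eq: "g = (2 * real s - 1) * \<epsilon> / (2 * real s)" unfolding g_def a_def using s2r
    by (simp add: field_simps)
  have g0: "g > 0" unfolding g_eq using s2r e0 by simp
  have d0: "\<delta> > 0" unfolding \<delta>_def using g0 b0 by simp
  have a0: "a > 0"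
  proof -
    have "\<epsilon> / (2 * real s) < \<epsilon>" using e0 s2r by (simp add: field_simps)
    thus ?thesis unfolding a_def using e1 by linarith
  qed
  have nz1: "2 * real s - 1 \<noteq> 0" "real s - 1 \<noteq> 0" "real s \<noteq> 0" using s2r by auto
  have gen: "\<And>x e::real. x \<noteq> 0 \<Longrightarrow> x * (e/(2*x)) = e/2" by (simp add: field_simps)
  have h0: "(real s - 1) * (\<epsilon> / (2 * (real s - 1))) = \<epsilon> / 2" using gen[OF nz1(2)] .
  have h1: "\<beta> = (real s - 1) / (2 * real s - 1) + \<epsilon> / 2" unfolding \<beta>_def C_def
    by (simp only: distrib_left h0) simp
  have h2: "real s * a = real s / (2 * real s - 1) - \<epsilon> / 2" unfolding a_def using nz1
    by (simp add: field_simps)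
  have h3: "real s / (2 * real s - 1) + (real s - 1) / (2 * real s - 1) = 1" using nz1
    by (simp add: field_simps flip: add_divide_distrib)
  have sa_beta: "real s * a + \<beta> = 1" using h1 h2 h3 by linarith
  have big: "1 < 2 * real s * a"
  proof -
    have "2 * real s * a = 2 * real s / (2 * real s - 1) - \<epsilon>" unfolding a_def using s2r by (simp add: field_simps)
    moreover have "2 * real s / (2 * real s - 1) = 1 + 1 / (2 * real s - 1)" using s2r by (simp add: field_simps)
    ultimately show ?thesis using e1 by linarith
  qed
  show ?thesis
  proof (intro exI[of _ "\<delta>/2"] conjI exI[of _ N] allI impI)
    show "\<delta>/2 > 0" using d0 by simp
    fix n :: nat assume nN: "N \<le> n" and en: "even n"
    define b where "b = \<beta> / (real n - real s)"
    define K where "K = nat \<lceil>g / b\<rceil>"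
    have sn: "s < n" and n2s: "2 * s \<le> n" using nN by (auto simp: N_def)
    have n1: "n \<ge> 1" using sn by simp
    have nsr: "real n - real s \<ge> real n / 2" using n2s by simp
    have nsp: "real n - real s > 0" using sn by simp
    have b0': "b > 0" unfolding b_def using b0 nsp by simp
    have Geq: "G_star_p s \<epsilon> n = (\<lambda>i. if i<s then a else b)"
      unfolding G_star_p_def a_def b_def \<beta>_def C_def by (intro ext) simp
    have tot: "real s * a + real (n-s) * b = 1"
      using sa_beta nsp sn unfolding b_def by (simp add: of_nat_diff)
    have Kb: "\<forall>c::nat. c < K \<longrightarrow> real c * b < 1 - (2 * real s - 1) * a"
    proof (intro allI impI)
      fix c :: nat assume "c < K"
      hence "int c < \<lceil>g / b\<rceil>" unfolding K_def by (simp only: zless_nat_eq_int_zless)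
      hence "real c < g / b" by (metis less_ceiling_iff of_int_of_nat_eq)
      thus "real c * b < 1 - (2 * real s - 1) * a" using b0' unfolding g_def[symmetric]
        by (simp add: field_simps)
    qed
    have Kd: "real K \<ge> \<delta> * real n"
    proof -
      have "g / b = g * (real n - real s) / \<beta>" unfolding b_def using nsp b0 by simp
      also have "\<dots> \<ge> g * (real n / 2) / \<beta>" using nsr g0 b0
        by (intro divide_right_mono mult_left_mono) auto
      also have "g * (real n / 2) / \<beta> = \<delta> * real n" unfolding \<delta>_def by (simp add: field_simps)
      finally have "\<delta> * real n \<le> g / b" .
      also have "g / b \<le> real K" unfolding K_def by (rule real_nat_ceiling_ge)
      finally show ?thesis .
    qed

    have eL1: "exp L \<le> real (nat \<lceil>exp L\<rceil>)" by (rule real_nat_ceiling_ge)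
    have "nat \<lceil>exp L\<rceil> \<le> n" using nN unfolding N_def by (metis le_add2 le_trans)
    hence "real (nat \<lceil>exp L\<rceil>) \<le> real n" by (rule of_nat_mono)
    hence "exp L \<le> real n" using eL1 by linarith
    hence Ln: "ln (real n) \<ge> 2 * ln 4 / \<delta>" unfolding L_def[symmetric]
      using ln_ge_iff[of "real n" L] n1 by simp
    have A1: "2^n \<le> real n ^ K" and A2: "real n powr (\<delta>/2 * real n) \<le> real n ^ K / 4^n"
      using asym[OF d0 n1 Ln Kd] by auto
    have "ennreal (real n powr (\<delta>/2 * real n)) \<le> ennreal (real n ^ K / 4^n)"
      using A2 by (rule ennreal_leI)
    also have "\<dots> \<le> ea_expected_evals n (\<lambda>i. if i<s then a else b)"
      by (rule lower_bound_n[OF sn es en a0 b0' tot big Kb A1])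
    finally show "ennreal (real n powr (\<delta>/2 * real n)) \<le> ea_expected_evals n (G_star_p s \<epsilon> n)"
      using Geq by simp
  qed
qed


end
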